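(* Let $A$ be a metabelian Lie algebra over a field $k$ and let $J$ be either $A^2$ or $\mathrm{Fit}(A)$ (the latter in case $\mathrm{Fit}(A)$ is abelian). Let $\{a_\alpha:\alpha\in\Lambda\}\subseteq A$ be a family whose images form a basis of $A/J$, let $R=k[x_\alpha:\alpha\in\Lambda]$ with $J$ regarded as an $R$-module, and let $\{b_\beta:\beta\in B\}$ be a generating set of the $R$-module $J$. Let $f\in R$ have zero constant term, written as $f=x_{j_1}f_1+\dots+x_{j_q}f_q$ with $j_1,\dots,j_q\in\Lambda$, $f_1,\dots,f_q\in R$. Then there is a Lie algebra homomorphism $\varphi:A\to A$ with $\varphi(b_\beta)=b_\beta\cdot(1+f)$ for all $\beta\in B$ and $\varphi(a_\alpha)=a_\alpha+h_\alpha$ for all $\alpha\in\Lambda$, where $h_\alpha=(a_\alpha\circ a_{j_1})\cdot f_1+\dots+(a_\alpha\circ a_{j_q})\cdot f_q\in A^2$. Moreover, if $J$ is a torsion-free $R$-module, then $\varphi$ is injective.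
   Context: A Lie algebra is metabelian if $(a\circ b)\circ(c\circ d)=0$ identically; $A^2$ is the ideal spanned by all products $a\circ b$; $\mathrm{Fit}(A)$ is the ideal generated by all elements lying in nilpotent ideals. For an abelian ideal $J\supseteq A^2$ and a family $\{a_\alpha\}$ as in the claim, $J$ is an $R$-module via $b\cdot x_\alpha=b\circ a_\alpha$ ($b\in J$), extended multiplicatively and $k$-linearly (this is well defined). The family $\{a_\alpha\}\cup\{b_\beta\}$ generates $A$ as a Lie algebra. *)

theory Defs
  imports Complex_Main "HOL-Library.Poly_Mapping"
begin

text \<open>A Lie algebra over a field 'k: the carrier is the whole type 'v, a vector space
  via the scalar multiplication sc, with Lie bracket br.\<close>

definition lie_algebra :: "('k::field \<Rightarrow> 'v::ab_group_add \<Rightarrow> 'v) \<Rightarrow> ('v \<Rightarrow> 'v \<Rightarrow> 'v) \<Rightarrow> bool" where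
  "lie_algebra sc br \<longleftrightarrow> vector_space sc
     \<and> (\<forall>x y z. br (x + y) z = br x z + br y z)
     \<and> (\<forall>x y z. br x (y + z) = br x y + br x z)
     \<and> (\<forall>c x y. br (sc c x) y = sc c (br x y))
     \<and> (\<forall>c x y. br x (sc c y) = sc c (br x y))
     \<and> (\<forall>x. br x x = 0)
     \<and> (\<forall>x y z. br x (br y z) + br y (br z x) + br z (br x y) = 0)"

definition metabelian :: "('v \<Rightarrow> 'v \<Rightarrow> 'v::zero) \<Rightarrow> bool" where
  "metabelian br \<longleftrightarrow> (\<forall>a b c d. br (br a b) (br c d) = 0)"

definition lie_ideal :: "('k::field \<Rightarrow> 'v::ab_group_add \<Rightarrow> 'v) \<Rightarrow> ('v \<Rightarrow> 'v \<Rightarrow> 'v) \<Rightarrow> 'v set \<Rightarrow> bool" where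
  "lie_ideal sc br I \<longleftrightarrow> module.subspace sc I \<and> (\<forall>x i. i \<in> I \<longrightarrow> br x i \<in> I)"

definition derived :: "('k::field \<Rightarrow> 'v::ab_group_add \<Rightarrow> 'v) \<Rightarrow> ('v \<Rightarrow> 'v \<Rightarrow> 'v) \<Rightarrow> 'v set" where
  "derived sc br = module.span sc {br x y | x y. True}"

fun lcs :: "('k::field \<Rightarrow> 'v::ab_group_add \<Rightarrow> 'v) \<Rightarrow> ('v \<Rightarrow> 'v \<Rightarrow> 'v) \<Rightarrow> 'v set \<Rightarrow> nat \<Rightarrow> 'v set" where
  "lcs sc br I 0 = I"
| "lcs sc br I (Suc n) = module.span sc {br x y | x y. x \<in> I \<and> y \<in> lcs sc br I n}"

definition nilpotent_ideal :: "('k::field \<Rightarrow> 'v::ab_group_add \<Rightarrow> 'v) \<Rightarrow> ('v \<Rightarrow> 'v \<Rightarrow> 'v) \<Rightarrow> 'v set \<Rightarrow> bool" where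
  "nilpotent_ideal sc br I \<longleftrightarrow> lie_ideal sc br I \<and> (\<exists>n. lcs sc br I n = {0})"

definition fitting :: "('k::field \<Rightarrow> 'v::ab_group_add \<Rightarrow> 'v) \<Rightarrow> ('v \<Rightarrow> 'v \<Rightarrow> 'v) \<Rightarrow> 'v set" where
  "fitting sc br = \<Inter> {I. lie_ideal sc br I \<and> \<Union> {N. nilpotent_ideal sc br N} \<subseteq> I}"

definition abelian_set :: "('v \<Rightarrow> 'v \<Rightarrow> 'v::zero) \<Rightarrow> 'v set \<Rightarrow> bool" where
  "abelian_set br J \<longleftrightarrow> (\<forall>x\<in>J. \<forall>y\<in>J. br x y = 0)"

text \<open>The images of the family a form a basis of A/J.\<close>
definition basis_mod :: "('k::field \<Rightarrow> 'v::ab_group_add \<Rightarrow> 'v) \<Rightarrow> 'v set \<Rightarrow> ('l \<Rightarrow> 'v) \<Rightarrow> bool" where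
  "basis_mod sc J a \<longleftrightarrow>
     (\<forall>F c. finite F \<longrightarrow> (\<Sum>\<alpha>\<in>F. sc (c \<alpha>) (a \<alpha>)) \<in> J \<longrightarrow> (\<forall>\<alpha>\<in>F. c \<alpha> = 0))
   \<and> (\<forall>v. \<exists>F c. finite F \<and> v - (\<Sum>\<alpha>\<in>F. sc (c \<alpha>) (a \<alpha>)) \<in> J)"

text \<open>R = k[x_alpha]: polynomials as finitely supported maps from monomials (exponent
  vectors) to coefficients. The variable x_alpha: \<close>
definition pvar :: "'l \<Rightarrow> ('l \<Rightarrow>\<^sub>0 nat) \<Rightarrow>\<^sub>0 'k::comm_ring_1" where
  "pvar \<alpha> = Poly_Mapping.single (Poly_Mapping.single \<alpha> 1) 1"

text \<open>Action of a monomial x^m on b: apply (- \<circ> a_alpha) m(alpha) times for each alpha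
  (these operators commute on J, so the order is irrelevant there).\<close>
definition mono_act :: "('v \<Rightarrow> 'v \<Rightarrow> 'v) \<Rightarrow> ('l \<Rightarrow> 'v) \<Rightarrow> ('l \<Rightarrow>\<^sub>0 nat) \<Rightarrow> 'v \<Rightarrow> 'v" where
  "mono_act br a m b = Finite_Set.fold (\<lambda>\<alpha> v. ((\<lambda>w. br w (a \<alpha>)) ^^ Poly_Mapping.lookup m \<alpha>) v) b (Poly_Mapping.keys m)"

definition poly_act :: "('k::comm_ring_1 \<Rightarrow> 'v::ab_group_add \<Rightarrow> 'v) \<Rightarrow> ('v \<Rightarrow> 'v \<Rightarrow> 'v) \<Rightarrow> ('l \<Rightarrow> 'v)
    \<Rightarrow> 'v \<Rightarrow> (('l \<Rightarrow>\<^sub>0 nat) \<Rightarrow>\<^sub>0 'k) \<Rightarrow> 'v" where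
  "poly_act sc br a b p = (\<Sum>m\<in>Poly_Mapping.keys p. sc (Poly_Mapping.lookup p m) (mono_act br a m b))"

definition generates_module :: "('k::field \<Rightarrow> 'v::ab_group_add \<Rightarrow> 'v) \<Rightarrow> ('v \<Rightarrow> 'v \<Rightarrow> 'v) \<Rightarrow> ('l \<Rightarrow> 'v)
    \<Rightarrow> 'v set \<Rightarrow> ('b \<Rightarrow> 'v) \<Rightarrow> bool" where
  "generates_module sc br a J g \<longleftrightarrow> range g \<subseteq> J \<and>
     (\<forall>v\<in>J. \<exists>F r. finite F \<and> v = (\<Sum>\<beta>\<in>F. poly_act sc br a (g \<beta>) (r \<beta>)))"

definition torsion_free :: "('k::field \<Rightarrow> 'v::ab_group_add \<Rightarrow> 'v) \<Rightarrow> ('v \<Rightarrow> 'v \<Rightarrow> 'v) \<Rightarrow> ('l \<Rightarrow> 'v)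
    \<Rightarrow> 'v set \<Rightarrow> bool" where
  "torsion_free sc br a J \<longleftrightarrow> (\<forall>v\<in>J. \<forall>p. p \<noteq> 0 \<longrightarrow> poly_act sc br a v p = 0 \<longrightarrow> v = 0)"

definition lie_hom :: "('k::field \<Rightarrow> 'v::ab_group_add \<Rightarrow> 'v) \<Rightarrow> ('v \<Rightarrow> 'v \<Rightarrow> 'v) \<Rightarrow> ('v \<Rightarrow> 'v) \<Rightarrow> bool" where
  "lie_hom sc br \<phi> \<longleftrightarrow> Vector_Spaces.linear sc sc \<phi> \<and> (\<forall>x y. \<phi> (br x y) = br (\<phi> x) (\<phi> y))"

end

theory Submission imports Defs begin

locale mla = vector_space sc
  for sc :: "'k::field \<Rightarrow> 'v::ab_group_add \<Rightarrow> 'v" +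
  fixes br :: "'v \<Rightarrow> 'v \<Rightarrow> 'v" and J :: "'v set" and a :: "'l \<Rightarrow> 'v"
  assumes addL: "br (x+y) z = br x z + br y z"
  and addR: "br x (y+z) = br x y + br x z"
  and scL: "br (sc c x) y = sc c (br x y)"
  and scR: "br x (sc c y) = sc c (br x y)"
  and alt: "br x x = 0"
  and jac: "br x (br y z) + br y (br z x) + br z (br x y) = 0"
  and subJ: "subspace J"
  and prodJ: "br x y \<in> J"
  and abJ: "x \<in> J \<Longrightarrow> y \<in> J \<Longrightarrow> br x y = 0"
  and basis: "basis_mod sc J a"
begin

lemma br0L[simp]: "br 0 y = 0"
  using addL[of 0 0 y] by simp
lemma br0R[simp]: "br x 0 = 0"
  using addR[of x 0 0] by simp
lemma brnegL: "br (-x) y = - br x y"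
  using addL[of x "-x" y] by (simp add: eq_neg_iff_add_eq_0 add.commute)
lemma brnegR: "br x (-y) = - br x y"
  using addR[of x y "-y"] by (simp add: eq_neg_iff_add_eq_0 add.commute)
lemma brdiffL: "br (x - y) z = br x z - br y z"
  using addL[of x "-y" z] by (simp add: brnegL)
lemma brdiffR: "br x (y - z) = br x y - br x z"
  using addR[of x y "-z"] by (simp add: brnegR)
lemma anti: "br x y = - br y x"
proof -
  have "br (x+y) (x+y) = br x x + br y x + (br x y + br y y)" by (simp only: addL addR)
  then have "br x y + br y x = 0" by (simp add: alt add.commute)
  then show ?thesis by (simp add: eq_neg_iff_add_eq_0)
qed

lemma jac2: "br (br x y) z = br (br x z) y - br (br y z) x"
proof -
  have 1: "br (br x y) z = - br z (br x y)" by (rule anti)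
  have 2: "br (br x z) y = br y (br z x)"
    by (metis anti brnegL minus_minus)
  have 3: "br (br y z) x = - br x (br y z)" by (rule anti)
  show ?thesis using jac[of x y z] 1 2 3
    by (metis (no_types, lifting) add.commute add_diff_cancel_left' add_uminus_conv_diff diff_add_cancel diff_minus_eq_add eq_neg_iff_add_eq_0)
qed

definition T :: "'l \<Rightarrow> 'v \<Rightarrow> 'v" where "T \<alpha> w = br w (a \<alpha>)"

lemma T_add: "T \<alpha> (x + y) = T \<alpha> x + T \<alpha> y" by (simp add: T_def addL)
lemma T_scale: "T \<alpha> (sc c x) = sc c (T \<alpha> x)" by (simp add: T_def scL)
lemma T_zero[simp]: "T \<alpha> 0 = 0" by (simp add: T_def)
lemma T_diff: "T \<alpha> (x - y) = T \<alpha> x - T \<alpha> y" by (simp add: T_def brdiffL)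
lemma T_in: "T \<alpha> w \<in> J" by (simp add: T_def prodJ)
lemma T_sum: "T \<alpha> (sum g S) = (\<Sum>s\<in>S. T \<alpha> (g s))"
  by (induct S rule: infinite_finite_induct) (auto simp: T_add)

lemma T_comm: assumes "w \<in> J" shows "T \<alpha> (T \<beta> w) = T \<beta> (T \<alpha> w)"
proof -
  have "br (br (a \<beta>) (a \<alpha>)) w = 0" using abJ[OF prodJ assms] .
  then show ?thesis using jac2[of w "a \<beta>" "a \<alpha>"] by (simp add: T_def)
qed

lemma Tpow_in: "w \<in> J \<Longrightarrow> (T \<alpha> ^^ n) w \<in> J"
  by (induct n) (auto simp: T_in)
lemma Tpow_add: "(T \<alpha> ^^ n) (x + y) = (T \<alpha> ^^ n) x + (T \<alpha> ^^ n) y"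
  by (induct n) (auto simp: T_add)
lemma Tpow_scale: "(T \<alpha> ^^ n) (sc c x) = sc c ((T \<alpha> ^^ n) x)"
  by (induct n) (auto simp: T_scale)
lemma Tpow_comm1: "w \<in> J \<Longrightarrow> T \<beta> ((T \<alpha> ^^ n) w) = (T \<alpha> ^^ n) (T \<beta> w)"
  by (induct n) (auto simp: T_comm Tpow_in)
lemma Tpow_comm: "w \<in> J \<Longrightarrow> (T \<beta> ^^ k) ((T \<alpha> ^^ n) w) = (T \<alpha> ^^ n) ((T \<beta> ^^ k) w)"
  by (induct k) (auto simp: Tpow_comm1 Tpow_in)

definition G :: "('l \<Rightarrow>\<^sub>0 nat) \<Rightarrow> 'l \<Rightarrow> 'v \<Rightarrow> 'v" where
  "G m \<alpha> v = (if v \<in> J then (T \<alpha> ^^ Poly_Mapping.lookup m \<alpha>) v else v)"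

lemma G_cfc: "comp_fun_commute_on UNIV (G m)"
proof
  fix x y :: 'l
  show "G m y \<circ> G m x = G m x \<circ> G m y"
    by (auto simp: G_def fun_eq_iff Tpow_in Tpow_comm)
qed

lemma G_ins: "finite A \<Longrightarrow> x \<notin> A \<Longrightarrow> Finite_Set.fold (G m) z (insert x A) = G m x (Finite_Set.fold (G m) z A)"
  by (rule comp_fun_commute_on.fold_insert[OF G_cfc]) auto

lemma T_fun: "T \<alpha> = (\<lambda>w. br w (a \<alpha>))" by (simp add: fun_eq_iff T_def)

lemma G_in: "v \<in> J \<Longrightarrow> G m \<alpha> v \<in> J" by (simp add: G_def Tpow_in)

lemma mono_act_eq: "w \<in> J \<Longrightarrow> mono_act br a m w = Finite_Set.fold (G m) w (Poly_Mapping.keys m)"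
  unfolding mono_act_def
  apply (rule fold_closed_eq[where B=J])
    apply (simp add: G_def T_fun)
   apply (simp add: G_in)
  apply assumption
  done

lemma F_in: "finite A \<Longrightarrow> w \<in> J \<Longrightarrow> Finite_Set.fold (G m) w A \<in> J"
  by (induct A rule: finite_induct) (auto simp: G_ins G_in)

lemma F_add: "finite A \<Longrightarrow> x \<in> J \<Longrightarrow> y \<in> J \<Longrightarrow>
   Finite_Set.fold (G m) (x + y) A = Finite_Set.fold (G m) x A + Finite_Set.fold (G m) y A"
  by (induct A rule: finite_induct)
    (auto simp: G_ins G_def F_in subspace_add[OF subJ] Tpow_add)

lemma F_scale: "finite A \<Longrightarrow> x \<in> J \<Longrightarrow>
   Finite_Set.fold (G m) (sc c x) A = sc c (Finite_Set.fold (G m) x A)"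
  by (induct A rule: finite_induct)
    (auto simp: G_ins G_def F_in subspace_scale[OF subJ] Tpow_scale)

lemma F_T: "finite A \<Longrightarrow> x \<in> J \<Longrightarrow>
   T \<gamma> (Finite_Set.fold (G m) x A) = Finite_Set.fold (G m) (T \<gamma> x) A"
  by (induct A rule: finite_induct)
    (auto simp: G_ins G_def F_in T_in Tpow_comm1)

lemma M_in: "w \<in> J \<Longrightarrow> mono_act br a m w \<in> J"
  by (simp add: mono_act_eq F_in)
lemma M_add: "x \<in> J \<Longrightarrow> y \<in> J \<Longrightarrow> mono_act br a m (x+y) = mono_act br a m x + mono_act br a m y"
  by (simp add: mono_act_eq F_add subspace_add[OF subJ])
lemma M_scale: "x \<in> J \<Longrightarrow> mono_act br a m (sc c x) = sc c (mono_act br a m x)"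
  by (simp add: mono_act_eq F_scale subspace_scale[OF subJ])
lemma M_T: "x \<in> J \<Longrightarrow> T \<gamma> (mono_act br a m x) = mono_act br a m (T \<gamma> x)"
  by (simp add: mono_act_eq F_T T_in)
lemma M_zero: "mono_act br a 0 w = w"
  by (simp add: mono_act_def)

lemma M_succ: assumes w: "w \<in> J"
  shows "mono_act br a (Poly_Mapping.single \<alpha> 1 + m) w = T \<alpha> (mono_act br a m w)"
proof -
  define m' where "m' = Poly_Mapping.single \<alpha> 1 + m"
  define A' where "A' = Poly_Mapping.keys m - {\<alpha>}"
  have lm': "Poly_Mapping.lookup m' k = (if k = \<alpha> then Suc (Poly_Mapping.lookup m k) else Poly_Mapping.lookup m k)" for k
    by (simp add: m'_def lookup_add lookup_single when_def)
  have km': "Poly_Mapping.keys m' = insert \<alpha> A'"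
    by (auto simp: A'_def in_keys_iff lm' split: if_splits)
  have fin: "finite A'" by (simp add: A'_def)
  have nA: "\<alpha> \<notin> A'" by (simp add: A'_def)
  define v where "v = Finite_Set.fold (G m) w A'"
  have vJ: "v \<in> J" using F_in[OF fin w] by (simp add: v_def)
  have eqf: "Finite_Set.fold (G m') w A' = v"
    unfolding v_def
    by (rule Finite_Set.fold_cong[OF G_cfc G_cfc _ fin]) (auto simp: G_def lm' nA fun_eq_iff)
  have 1: "mono_act br a m' w = G m' \<alpha> v"
    using mono_act_eq[OF w, of m'] km' G_ins[OF fin nA, of m' w] eqf
    by simp
  have 2: "mono_act br a m w = G m \<alpha> v"
  proof (cases "\<alpha> \<in> Poly_Mapping.keys m")
    case True
    then have "Poly_Mapping.keys m = insert \<alpha> A'" by (auto simp: A'_def)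
    then show ?thesis
      using mono_act_eq[OF w, of m] G_ins[OF fin nA, of m w]
      by (simp add: v_def)
  next
    case False
    then have "Poly_Mapping.keys m = A'" "Poly_Mapping.lookup m \<alpha> = 0" by (auto simp: A'_def in_keys_iff)
    then show ?thesis using mono_act_eq[OF w, of m] vJ by (simp add: v_def G_def)
  qed
  show ?thesis unfolding m'_def[symmetric] using 1 2 vJ Tpow_in[OF vJ]
    by (simp add: G_def lm')
qed

abbreviation PA where "PA w p \<equiv> poly_act sc br a w p"

lemma P_keys: "finite S \<Longrightarrow> Poly_Mapping.keys p \<subseteq> S \<Longrightarrow>
  PA w p = (\<Sum>m\<in>S. sc (Poly_Mapping.lookup p m) (mono_act br a m w))"
  unfolding poly_act_def by (rule sum.mono_neutral_left) (auto simp: in_keys_iff)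

lemma P_add: "PA w (p + q) = PA w p + PA w q"
proof -
  let ?S = "Poly_Mapping.keys p \<union> Poly_Mapping.keys q"
  have f: "finite ?S" by simp
  show ?thesis
    using P_keys[OF f, of "p+q" w] P_keys[OF f, of p w] P_keys[OF f, of q w] keys_add[of p q]
    by (simp add: lookup_add scale_left_distrib sum.distrib)
qed

lemma P_zero[simp]: "PA w 0 = 0" by (simp add: poly_act_def)

lemma P_sum: "PA w (sum g I) = (\<Sum>i\<in>I. PA w (g i))"
  by (induct I rule: infinite_finite_induct) (auto simp: P_add)

lemma P_single: "PA w (Poly_Mapping.single m c) = sc c (mono_act br a m w)"
  by (cases "c = 0") (simp_all add: poly_act_def)

lemma P_one: "PA w 1 = w"
  by (simp add: poly_act_def M_zero)

lemma P_in: "w \<in> J \<Longrightarrow> PA w p \<in> J"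
  unfolding poly_act_def
  by (intro subspace_sum[OF subJ] subspace_scale[OF subJ] M_in)

lemma P_wadd: "x \<in> J \<Longrightarrow> y \<in> J \<Longrightarrow> PA (x + y) p = PA x p + PA y p"
  unfolding poly_act_def by (simp add: M_add scale_right_distrib sum.distrib)

lemma P_wscale: "x \<in> J \<Longrightarrow> PA (sc c x) p = sc c (PA x p)"
  unfolding poly_act_def by (simp add: M_scale scale_left_commute scale_sum_right mult.commute)

lemma P_wdiff: "x \<in> J \<Longrightarrow> y \<in> J \<Longrightarrow> PA (x - y) p = PA x p - PA y p"
  using P_wadd[of "x - y" y p] subspace_diff[OF subJ, of x y] by (simp add: algebra_simps)

lemma P_T: "w \<in> J \<Longrightarrow> T \<gamma> (PA w p) = PA (T \<gamma> w) p"
  unfolding poly_act_def by (simp add: T_sum T_scale M_T)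

lemma expand: "p = (\<Sum>m\<in>Poly_Mapping.keys p. Poly_Mapping.single m (Poly_Mapping.lookup p m))"
proof (rule poly_mapping_eqI)
  fix k
  show "Poly_Mapping.lookup p k = Poly_Mapping.lookup (\<Sum>m\<in>Poly_Mapping.keys p. Poly_Mapping.single m (Poly_Mapping.lookup p m)) k"
    by (simp add: lookup_sum lookup_single when_def in_keys_iff)
qed

lemma P_var: assumes w: "w \<in> J" shows "PA w (pvar \<alpha> * p) = PA (T \<alpha> w) p"
proof -
  have "pvar \<alpha> * p = (\<Sum>m\<in>Poly_Mapping.keys p. pvar \<alpha> * Poly_Mapping.single m (Poly_Mapping.lookup p m))"
    by (subst expand[of p]) (simp add: sum_distrib_left)
  also have "\<dots> = (\<Sum>m\<in>Poly_Mapping.keys p. Poly_Mapping.single (Poly_Mapping.single \<alpha> 1 + m) (Poly_Mapping.lookup p m))"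
    by (simp add: pvar_def mult_single)
  finally have "PA w (pvar \<alpha> * p) = (\<Sum>m\<in>Poly_Mapping.keys p. sc (Poly_Mapping.lookup p m) (mono_act br a (Poly_Mapping.single \<alpha> 1 + m) w))"
    by (simp add: P_sum P_single)
  also have "\<dots> = PA (T \<alpha> w) p"
    by (simp add: poly_act_def M_succ[OF w, simplified] M_T[OF w])
  finally show ?thesis .
qed

lemma basis1: "finite F \<Longrightarrow> (\<Sum>\<alpha>\<in>F. sc (c \<alpha>) (a \<alpha>)) \<in> J \<Longrightarrow> \<alpha> \<in> F \<Longrightarrow> c \<alpha> = 0"
  using basis unfolding basis_mod_def by blast

lemma basis2: "\<exists>F c. finite F \<and> v - (\<Sum>\<alpha>\<in>F. sc (c \<alpha>) (a \<alpha>)) \<in> J"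
  using basis unfolding basis_mod_def by blast

lemma P_w0[simp]: "PA 0 p = 0"
  using P_wscale[of 0 0 p] subspace_0[OF subJ] by simp

end

locale mla2 = mla sc br J a
  for sc :: "'k::field \<Rightarrow> 'v::ab_group_add \<Rightarrow> 'v" and br J and a :: "'l \<Rightarrow> 'v" +
  fixes q :: nat and j :: "nat \<Rightarrow> 'l" and fs :: "nat \<Rightarrow> ('l \<Rightarrow>\<^sub>0 nat) \<Rightarrow>\<^sub>0 'k::field"
begin

definition "FF = (\<Sum>i<q. pvar (j i) * fs i)"
definition "psi u = poly_act sc br a u (1 + FF)"
definition "h \<alpha> = (\<Sum>i<q. poly_act sc br a (br (a \<alpha>) (a (j i))) (fs i))"
definition "rep v = (SOME (K, d). finite K \<and> v - (\<Sum>\<alpha>\<in>K. sc (d \<alpha>) (a \<alpha>)) \<in> J)"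
definition "phi v = (case rep v of (K, d) \<Rightarrow>
   (\<Sum>\<alpha>\<in>K. sc (d \<alpha>) (a \<alpha> + h \<alpha>)) + psi (v - (\<Sum>\<alpha>\<in>K. sc (d \<alpha>) (a \<alpha>))))"

lemma psi_exp: "u \<in> J \<Longrightarrow> psi u = u + (\<Sum>i<q. poly_act sc br a (T (j i) u) (fs i))"
  by (simp add: psi_def FF_def P_add P_one P_sum P_var)

lemma psi_in: "u \<in> J \<Longrightarrow> psi u \<in> J" by (simp add: psi_def P_in)
lemma psi_add: "x \<in> J \<Longrightarrow> y \<in> J \<Longrightarrow> psi (x + y) = psi x + psi y" by (simp add: psi_def P_wadd)
lemma psi_scale: "x \<in> J \<Longrightarrow> psi (sc c x) = sc c (psi x)" by (simp add: psi_def P_wscale)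
lemma psi_T: "x \<in> J \<Longrightarrow> psi (T \<gamma> x) = T \<gamma> (psi x)" by (simp add: psi_def P_T)
lemma psi_0[simp]: "psi 0 = 0" by (simp add: psi_def)
lemma h_in: "h \<alpha> \<in> J"
  unfolding h_def by (intro subspace_sum[OF subJ] P_in prodJ)

lemma ext0: "finite H \<Longrightarrow> F \<subseteq> H \<Longrightarrow>
  (\<Sum>\<alpha>\<in>H. sc (if \<alpha> \<in> F then c \<alpha> else 0) (x \<alpha>)) = (\<Sum>\<alpha>\<in>F. sc (c \<alpha>) (x \<alpha>))"
  by (rule sum.mono_neutral_cong_right) simp_all

lemma uniq:
  assumes F: "finite F" and K: "finite K"
    and D: "(\<Sum>\<alpha>\<in>F. sc (c \<alpha>) (a \<alpha>)) - (\<Sum>\<alpha>\<in>K. sc (d \<alpha>) (a \<alpha>)) \<in> J"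
  shows "(\<Sum>\<alpha>\<in>F. sc (c \<alpha>) (x \<alpha>)) = (\<Sum>\<alpha>\<in>K. sc (d \<alpha>) (x \<alpha>))"
proof -
  define H where "H = F \<union> K"
  define c' where "c' \<alpha> = (if \<alpha> \<in> F then c \<alpha> else 0)" for \<alpha>
  define d' where "d' \<alpha> = (if \<alpha> \<in> K then d \<alpha> else 0)" for \<alpha>
  have H: "finite H" "F \<subseteq> H" "K \<subseteq> H" using F K by (auto simp: H_def)
  have e: "(\<Sum>\<alpha>\<in>H. sc (c' \<alpha>) (y \<alpha>)) = (\<Sum>\<alpha>\<in>F. sc (c \<alpha>) (y \<alpha>))"
       "(\<Sum>\<alpha>\<in>H. sc (d' \<alpha>) (y \<alpha>)) = (\<Sum>\<alpha>\<in>K. sc (d \<alpha>) (y \<alpha>))" for y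
    unfolding c'_def d'_def using ext0 H by blast+
  have "(\<Sum>\<alpha>\<in>H. sc (c' \<alpha> - d' \<alpha>) (a \<alpha>)) =
      (\<Sum>\<alpha>\<in>H. sc (c' \<alpha>) (a \<alpha>)) - (\<Sum>\<alpha>\<in>H. sc (d' \<alpha>) (a \<alpha>))"
    by (simp add: scale_left_diff_distrib sum_subtractf)
  with D e have "(\<Sum>\<alpha>\<in>H. sc (c' \<alpha> - d' \<alpha>) (a \<alpha>)) \<in> J" by simp
  then have "\<forall>\<alpha>\<in>H. c' \<alpha> - d' \<alpha> = 0"
    using basis1[OF H(1), of "\<lambda>\<alpha>. c' \<alpha> - d' \<alpha>"] by blast
  then have "(\<Sum>\<alpha>\<in>H. sc (c' \<alpha>) (x \<alpha>)) = (\<Sum>\<alpha>\<in>H. sc (d' \<alpha>) (x \<alpha>))"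
    by (intro sum.cong) auto
  then show ?thesis using e by simp
qed

lemma decomp: obtains K d where "finite K" "v - (\<Sum>\<alpha>\<in>K. sc (d \<alpha>) (a \<alpha>)) \<in> J"
  using basis2[of v] by blast

lemma rep_prop: "case rep v of (K, d) \<Rightarrow> finite K \<and> v - (\<Sum>\<alpha>\<in>K. sc (d \<alpha>) (a \<alpha>)) \<in> J"
proof -
  obtain K d where "finite K" "v - (\<Sum>\<alpha>\<in>K. sc (d \<alpha>) (a \<alpha>)) \<in> J" by (rule decomp)
  then have "\<exists>p. case p of (K, d) \<Rightarrow> finite K \<and> v - (\<Sum>\<alpha>\<in>K. sc (d \<alpha>) (a \<alpha>)) \<in> J"
    by (intro exI[of _ "(K, d)"]) simp
  then show ?thesis unfolding rep_def by (rule someI_ex)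
qed

lemma phi_eq:
  assumes K: "finite K" and u: "v - (\<Sum>\<alpha>\<in>K. sc (d \<alpha>) (a \<alpha>)) \<in> J"
  shows "phi v = (\<Sum>\<alpha>\<in>K. sc (d \<alpha>) (a \<alpha> + h \<alpha>)) + psi (v - (\<Sum>\<alpha>\<in>K. sc (d \<alpha>) (a \<alpha>)))"
proof -
  obtain K' d' where r: "rep v = (K', d')" by (cases "rep v")
  with rep_prop[of v] have K': "finite K'" and u': "v - (\<Sum>\<alpha>\<in>K'. sc (d' \<alpha>) (a \<alpha>)) \<in> J" by auto
  have "(v - (\<Sum>\<alpha>\<in>K. sc (d \<alpha>) (a \<alpha>))) - (v - (\<Sum>\<alpha>\<in>K'. sc (d' \<alpha>) (a \<alpha>))) \<in> J"
    using subspace_diff[OF subJ u u'] .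
  then have D: "(\<Sum>\<alpha>\<in>K'. sc (d' \<alpha>) (a \<alpha>)) - (\<Sum>\<alpha>\<in>K. sc (d \<alpha>) (a \<alpha>)) \<in> J" by simp
  have e: "(\<Sum>\<alpha>\<in>K'. sc (d' \<alpha>) (x \<alpha>)) = (\<Sum>\<alpha>\<in>K. sc (d \<alpha>) (x \<alpha>))" for x
    by (rule uniq[OF K' K D])
  show ?thesis unfolding phi_def r using e[of a] e[of "\<lambda>\<alpha>. a \<alpha> + h \<alpha>"] by simp
qed

lemma comb:
  fixes K1 K2 :: "'l set" and d1 d2 :: "'l \<Rightarrow> 'k"
  assumes "finite K1" "finite K2"
  shows "\<exists>K d. finite K \<and> (\<forall>x. (\<Sum>\<alpha>\<in>K. sc (d \<alpha>) (x \<alpha>)) =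
      (\<Sum>\<alpha>\<in>K1. sc (d1 \<alpha>) (x \<alpha>)) + (\<Sum>\<alpha>\<in>K2. sc (d2 \<alpha>) (x \<alpha>)))"
proof (intro exI conjI allI)
  let ?K = "K1 \<union> K2"
  let ?d = "\<lambda>\<alpha>. (if \<alpha> \<in> K1 then d1 \<alpha> else 0) + (if \<alpha> \<in> K2 then d2 \<alpha> else 0)"
  show "finite ?K" using assms by simp
  fix x :: "'l \<Rightarrow> 'v"
  show "(\<Sum>\<alpha>\<in>?K. sc (?d \<alpha>) (x \<alpha>)) =
      (\<Sum>\<alpha>\<in>K1. sc (d1 \<alpha>) (x \<alpha>)) + (\<Sum>\<alpha>\<in>K2. sc (d2 \<alpha>) (x \<alpha>))"
    using ext0[of ?K K1 d1 x] ext0[of ?K K2 d2 x] assms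
    by (simp add: scale_left_distrib sum.distrib)
qed

lemma swap4: fixes A1 :: "'z::ab_semigroup_add" shows "(A1 + A2) + (p1 + p2) = (A1 + p1) + (A2 + p2)"
  by (simp add: add_ac)

lemma phi_add: "phi (x + y) = phi x + phi y"
proof -
  obtain K1 d1 where 1: "finite K1" "x - (\<Sum>\<alpha>\<in>K1. sc (d1 \<alpha>) (a \<alpha>)) \<in> J" by (rule decomp)
  obtain K2 d2 where 2: "finite K2" "y - (\<Sum>\<alpha>\<in>K2. sc (d2 \<alpha>) (a \<alpha>)) \<in> J" by (rule decomp)
  obtain K d where K: "finite K" and e: "\<And>z. (\<Sum>\<alpha>\<in>K. sc (d \<alpha>) (z \<alpha>)) =
      (\<Sum>\<alpha>\<in>K1. sc (d1 \<alpha>) (z \<alpha>)) + (\<Sum>\<alpha>\<in>K2. sc (d2 \<alpha>) (z \<alpha>))"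
    using comb[OF 1(1) 2(1)] by blast
  let ?u1 = "x - (\<Sum>\<alpha>\<in>K1. sc (d1 \<alpha>) (a \<alpha>))"
  let ?u2 = "y - (\<Sum>\<alpha>\<in>K2. sc (d2 \<alpha>) (a \<alpha>))"
  have u: "(x + y) - (\<Sum>\<alpha>\<in>K. sc (d \<alpha>) (a \<alpha>)) = ?u1 + ?u2"
    using e[of a] by (simp add: algebra_simps)
  have uJ: "(x + y) - (\<Sum>\<alpha>\<in>K. sc (d \<alpha>) (a \<alpha>)) \<in> J"
    unfolding u using subspace_add[OF subJ 1(2) 2(2)] .
  have u': "x + y - ((\<Sum>\<alpha>\<in>K1. sc (d1 \<alpha>) (a \<alpha>)) + (\<Sum>\<alpha>\<in>K2. sc (d2 \<alpha>) (a \<alpha>))) = ?u1 + ?u2"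
    by (simp add: algebra_simps)
  have "phi (x + y) = (\<Sum>\<alpha>\<in>K. sc (d \<alpha>) (a \<alpha> + h \<alpha>)) + psi ((x + y) - (\<Sum>\<alpha>\<in>K. sc (d \<alpha>) (a \<alpha>)))"
    by (rule phi_eq[OF K uJ])
  also have "\<dots> = ((\<Sum>\<alpha>\<in>K1. sc (d1 \<alpha>) (a \<alpha> + h \<alpha>)) + (\<Sum>\<alpha>\<in>K2. sc (d2 \<alpha>) (a \<alpha> + h \<alpha>))) + psi (?u1 + ?u2)"
    unfolding e[of "\<lambda>\<alpha>. a \<alpha> + h \<alpha>"] e[of a] u' by (rule refl)
  also have "\<dots> = phi x + phi y"
    unfolding phi_eq[OF 1] phi_eq[OF 2] psi_add[OF 1(2) 2(2)] by (rule swap4)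
  finally show ?thesis .
qed

lemma phi_scale: "phi (sc r x) = sc r (phi x)"
proof -
  obtain K d where 1: "finite K" "x - (\<Sum>\<alpha>\<in>K. sc (d \<alpha>) (a \<alpha>)) \<in> J" by (rule decomp)
  have e: "(\<Sum>\<alpha>\<in>K. sc (r * d \<alpha>) (z \<alpha>)) = sc r (\<Sum>\<alpha>\<in>K. sc (d \<alpha>) (z \<alpha>))" for z
    by (simp add: scale_sum_right)
  have u: "sc r x - (\<Sum>\<alpha>\<in>K. sc (r * d \<alpha>) (a \<alpha>)) = sc r (x - (\<Sum>\<alpha>\<in>K. sc (d \<alpha>) (a \<alpha>)))"
    unfolding e by (simp add: scale_right_diff_distrib)
  have uJ: "sc r x - (\<Sum>\<alpha>\<in>K. sc (r * d \<alpha>) (a \<alpha>)) \<in> J"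
    unfolding u by (rule subspace_scale[OF subJ 1(2)])
  have u': "sc r x - sc r (\<Sum>\<alpha>\<in>K. sc (d \<alpha>) (a \<alpha>)) = sc r (x - (\<Sum>\<alpha>\<in>K. sc (d \<alpha>) (a \<alpha>)))"
    by (simp add: scale_right_diff_distrib)
  show ?thesis
    using phi_eq[OF 1(1) uJ] phi_eq[OF 1] psi_scale[OF 1(2)] e[of "\<lambda>\<alpha>. a \<alpha> + h \<alpha>"] e[of a] u'
    by (simp add: scale_right_distrib)
qed

lemma phi_0[simp]: "phi 0 = 0" using phi_scale[of 0 0] by simp
lemma phi_neg: "phi (- x) = - phi x"
  using phi_add[of x "-x"] by (simp add: eq_neg_iff_add_eq_0 add.commute)
lemma phi_diff: "phi (x - y) = phi x - phi y"
  using phi_add[of x "-y"] phi_neg[of y] by simp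

lemma phi_J: "u \<in> J \<Longrightarrow> phi u = psi u"
  using phi_eq[of "{}" u] by simp

lemma phi_a: "phi (a \<alpha>) = a \<alpha> + h \<alpha>"
  using phi_eq[of "{\<alpha>}" "a \<alpha>" "\<lambda>_. 1"] subspace_0[OF subJ] by simp

lemma phi_linear: "Vector_Spaces.linear sc sc phi"
  by unfold_locales (simp_all add: phi_add phi_scale)

definition "HP x y \<longleftrightarrow> phi (br x y) = br (phi x) (phi y)"

lemma HP_sym: "HP x y \<Longrightarrow> HP y x"
  unfolding HP_def by (metis anti phi_neg)

lemma HP_add: "HP x1 y \<Longrightarrow> HP x2 y \<Longrightarrow> HP (x1 + x2) y"
  unfolding HP_def by (simp add: addL phi_add)

lemma HP_scale: "HP x y \<Longrightarrow> HP (sc c x) y"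
  unfolding HP_def by (simp add: scL phi_scale)

lemma HP_0: "HP 0 y" unfolding HP_def by simp

lemma HP_sum: "finite K \<Longrightarrow> (\<And>\<alpha>. \<alpha> \<in> K \<Longrightarrow> HP (a \<alpha>) y) \<Longrightarrow> HP (\<Sum>\<alpha>\<in>K. sc (d \<alpha>) (a \<alpha>)) y"
  by (induct K rule: finite_induct) (auto simp: HP_0 HP_add HP_scale)

lemma HP_decomp: "(\<And>\<alpha>. HP (a \<alpha>) y) \<Longrightarrow> (\<And>u. u \<in> J \<Longrightarrow> HP u y) \<Longrightarrow> HP x y"
proof -
  assume A: "\<And>\<alpha>. HP (a \<alpha>) y" and B: "\<And>u. u \<in> J \<Longrightarrow> HP u y"
  obtain K d where K: "finite K" "x - (\<Sum>\<alpha>\<in>K. sc (d \<alpha>) (a \<alpha>)) \<in> J" by (rule decomp)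
  have "HP ((\<Sum>\<alpha>\<in>K. sc (d \<alpha>) (a \<alpha>)) + (x - (\<Sum>\<alpha>\<in>K. sc (d \<alpha>) (a \<alpha>)))) y"
    by (intro HP_add HP_sum K A B)
  then show "HP x y" by simp
qed

lemma B_JJ: "u \<in> J \<Longrightarrow> w \<in> J \<Longrightarrow> HP u w"
  unfolding HP_def by (simp add: abJ phi_J psi_in)

lemma B_Ja: assumes u: "u \<in> J" shows "HP u (a \<gamma>)"
proof -
  have "phi (br u (a \<gamma>)) = psi (T \<gamma> u)" by (simp add: phi_J prodJ T_def)
  also have "\<dots> = T \<gamma> (psi u)" by (rule psi_T[OF u])
  also have "\<dots> = br (psi u) (a \<gamma> + h \<gamma>)"
    by (simp add: T_def addR abJ[OF psi_in[OF u] h_in])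
  finally show ?thesis unfolding HP_def by (simp add: phi_J[OF u] phi_a)
qed

lemma B_aa: "HP (a \<alpha>) (a \<gamma>)"
proof -
  let ?w = "br (a \<alpha>) (a \<gamma>)"
  let ?X = "\<lambda>i. poly_act sc br a (T \<gamma> (br (a \<alpha>) (a (j i)))) (fs i)"
  let ?Y = "\<lambda>i. poly_act sc br a (T \<alpha> (br (a \<gamma>) (a (j i)))) (fs i)"
  have l: "phi ?w = ?w + (\<Sum>i<q. poly_act sc br a (T (j i) ?w) (fs i))"
    by (simp add: phi_J prodJ psi_exp)
  have Tj: "T (j i) ?w = T \<gamma> (br (a \<alpha>) (a (j i))) - T \<alpha> (br (a \<gamma>) (a (j i)))" for i
    unfolding T_def by (rule jac2)
  have l2: "(\<Sum>i<q. poly_act sc br a (T (j i) ?w) (fs i)) = (\<Sum>i<q. ?X i) - (\<Sum>i<q. ?Y i)"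
    by (simp add: Tj P_wdiff T_in sum_subtractf)
  have hg: "br (h \<alpha>) (a \<gamma>) = (\<Sum>i<q. ?X i)"
  proof -
    have "br (h \<alpha>) (a \<gamma>) = T \<gamma> (h \<alpha>)" by (simp add: T_def)
    also have "\<dots> = (\<Sum>i<q. T \<gamma> (poly_act sc br a (br (a \<alpha>) (a (j i))) (fs i)))"
      unfolding h_def by (rule T_sum)
    also have "\<dots> = (\<Sum>i<q. ?X i)"
      by (rule sum.cong) (simp_all add: P_T prodJ)
    finally show ?thesis .
  qed
  have ha: "br (a \<alpha>) (h \<gamma>) = - (\<Sum>i<q. ?Y i)"
  proof -
    have "br (a \<alpha>) (h \<gamma>) = - T \<alpha> (h \<gamma>)" by (simp add: T_def anti[of "a \<alpha>"])
    also have "T \<alpha> (h \<gamma>) = (\<Sum>i<q. T \<alpha> (poly_act sc br a (br (a \<gamma>) (a (j i))) (fs i)))"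
      unfolding h_def by (rule T_sum)
    also have "\<dots> = (\<Sum>i<q. ?Y i)"
      by (rule sum.cong) (simp_all add: P_T prodJ)
    finally show ?thesis .
  qed
  have r: "br (a \<alpha> + h \<alpha>) (a \<gamma> + h \<gamma>) = ?w + br (a \<alpha>) (h \<gamma>) + br (h \<alpha>) (a \<gamma>)"
    by (simp add: addL addR abJ h_in)
  show ?thesis unfolding HP_def phi_a using l l2 hg ha r by simp
qed

lemma hom: "phi (br x y) = br (phi x) (phi y)"
proof -
  have A: "HP (a \<alpha>) y" for \<alpha> y
    by (rule HP_sym, rule HP_decomp) (auto intro: B_aa B_Ja)
  have B: "HP u y" if "u \<in> J" for u y
    by (rule HP_sym, rule HP_decomp) (auto intro: HP_sym B_Ja B_JJ that)
  show ?thesis using HP_decomp[OF A B] unfolding HP_def by blast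
qed

lemma inj0:
  assumes tf: "torsion_free sc br a J" and f0: "Poly_Mapping.lookup FF 0 = 0" and v: "phi v = 0"
  shows "v = 0"
proof -
  obtain K d where K: "finite K" "v - (\<Sum>\<alpha>\<in>K. sc (d \<alpha>) (a \<alpha>)) \<in> J" by (rule decomp)
  let ?u = "v - (\<Sum>\<alpha>\<in>K. sc (d \<alpha>) (a \<alpha>))"
  have "phi v = (\<Sum>\<alpha>\<in>K. sc (d \<alpha>) (a \<alpha>)) + ((\<Sum>\<alpha>\<in>K. sc (d \<alpha>) (h \<alpha>)) + psi ?u)"
    using phi_eq[OF K] by (simp add: scale_right_distrib sum.distrib algebra_simps)
  then have "(\<Sum>\<alpha>\<in>K. sc (d \<alpha>) (a \<alpha>)) = - ((\<Sum>\<alpha>\<in>K. sc (d \<alpha>) (h \<alpha>)) + psi ?u)"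
    using v by (metis eq_neg_iff_add_eq_0)
  also have "\<dots> \<in> J"
    by (intro subspace_neg[OF subJ] subspace_add[OF subJ] subspace_sum[OF subJ]
        subspace_scale[OF subJ] h_in psi_in K(2))
  finally have "\<forall>\<alpha>\<in>K. d \<alpha> = 0" using basis1[OF K(1)] by blast
  then have z: "(\<Sum>\<alpha>\<in>K. sc (d \<alpha>) (x \<alpha>)) = 0" for x :: "'l \<Rightarrow> 'v" by simp
  have vJ: "v \<in> J" using K(2) z[of a] by simp
  have "psi v = 0" using v phi_J[OF vJ] by simp
  moreover have "1 + FF \<noteq> 0"
  proof
    assume "1 + FF = 0"
    then have "Poly_Mapping.lookup (1 + FF) 0 = 0" by simp
    then show False using f0 by (simp add: lookup_add)
  qed
  ultimately show ?thesis using tf vJ unfolding torsion_free_def psi_def by blast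
qed

lemma phi_inj: "torsion_free sc br a J \<Longrightarrow> Poly_Mapping.lookup FF 0 = 0 \<Longrightarrow> inj phi"
  by (rule injI) (metis inj0 phi_diff right_minus_eq)

end

lemma der_ab:
  assumes vs: "vector_space sc"
    and aL: "\<forall>x y z. br (x + y) z = br x z + br y z"
    and aR: "\<forall>x y z. br x (y + z) = br x y + br x z"
    and sL: "\<forall>c x y. br (sc c x) y = sc c (br x y)"
    and sR: "\<forall>c x y. br x (sc c y) = sc c (br x y)"
    and mb: "metabelian br"
    and x: "x \<in> derived sc br" and y: "y \<in> derived sc br"
  shows "br x y = (0::'v::ab_group_add)"
proof -
  interpret vs: vector_space sc by (rule vs)
  have z1: "br 0 w = 0" for w using aL[rule_format, of 0 0 w] by simp
  have z2: "br w 0 = 0" for w using aR[rule_format, of w 0 0] by simp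
  have A: "br u w = 0" if u: "u \<in> derived sc br" and w: "w \<in> {br x y | x y. True}" for u w
    using u[unfolded derived_def]
  proof (induct rule: vs.span_induct_alt)
    case base then show ?case by (simp add: z1)
  next
    case (step c x y)
    then show ?case using w mb by (auto simp: metabelian_def aL sL)
  qed
  show ?thesis
    using y[unfolded derived_def]
  proof (induct rule: vs.span_induct_alt)
    case base then show ?case by (simp add: z2)
  next
    case (step c z y)
    then show ?case using A[OF x] by (simp add: aR sR)
  qed
qed

theorem proposition2p2p4:
  fixes sc :: "'k::field \<Rightarrow> 'v::ab_group_add \<Rightarrow> 'v"
    and br :: "'v \<Rightarrow> 'v \<Rightarrow> 'v"
    and J :: "'v set"
    and a :: "'l \<Rightarrow> 'v"
    and b :: "'b \<Rightarrow> 'v"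
    and f :: "('l \<Rightarrow>\<^sub>0 nat) \<Rightarrow>\<^sub>0 'k"
    and q :: nat and j :: "nat \<Rightarrow> 'l" and fs :: "nat \<Rightarrow> ('l \<Rightarrow>\<^sub>0 nat) \<Rightarrow>\<^sub>0 'k"
  assumes "lie_algebra sc br"
    and "metabelian br"
    and "J = derived sc br \<or> (J = fitting sc br \<and> abelian_set br (fitting sc br))"
    and "basis_mod sc J a"
    and "generates_module sc br a J b"
    and "Poly_Mapping.lookup f 0 = 0"
    and "f = (\<Sum>i<q. pvar (j i) * fs i)"
  shows "\<exists>\<phi>. lie_hom sc br \<phi>
           \<and> (\<forall>\<beta>. \<phi> (b \<beta>) = poly_act sc br a (b \<beta>) (1 + f))
           \<and> (\<forall>\<alpha>. \<phi> (a \<alpha>) = a \<alpha> + (\<Sum>i<q. poly_act sc br a (br (a \<alpha>) (a (j i))) (fs i)))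
           \<and> (torsion_free sc br a J \<longrightarrow> inj \<phi>)"
proof -
  note L = assms(1)[unfolded lie_algebra_def]
  have vs: "vector_space sc" using L by blast
  interpret vs: vector_space sc by (rule vs)
  have aL: "\<forall>x y z. br (x + y) z = br x z + br y z" using L by blast
  have aR: "\<forall>x y z. br x (y + z) = br x y + br x z" using L by blast
  have sL: "\<forall>c x y. br (sc c x) y = sc c (br x y)" using L by blast
  have sR: "\<forall>c x y. br x (sc c y) = sc c (br x y)" using L by blast
  have al: "\<forall>x. br x x = 0" using L by blast
  have jc: "\<forall>x y z. br x (br y z) + br y (br z x) + br z (br x y) = 0" using L by blast
  have dab: "x \<in> derived sc br \<Longrightarrow> y \<in> derived sc br \<Longrightarrow> br x y = 0" for x y
    using der_ab[OF vs aL aR sL sR assms(2)] by blast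
  have dprod: "br x y \<in> derived sc br" for x y
    unfolding derived_def by (rule vs.span_base) blast
  have props: "vs.subspace J \<and> (\<forall>x y. br x y \<in> J) \<and> (\<forall>x y. x \<in> J \<longrightarrow> y \<in> J \<longrightarrow> br x y = 0)"
    using assms(3)
  proof
    assume J: "J = derived sc br"
    show ?thesis unfolding J using dab dprod by (auto simp: derived_def)
  next
    assume J: "J = fitting sc br \<and> abelian_set br (fitting sc br)"
    have nil: "nilpotent_ideal sc br (derived sc br)"
      unfolding nilpotent_ideal_def lie_ideal_def
    proof (intro conjI allI impI exI)
      show "vs.subspace (derived sc br)" by (simp add: derived_def)
      show "br x i \<in> derived sc br" for x i by (rule dprod)
      have "{br x y |x y. x \<in> derived sc br \<and> y \<in> lcs sc br (derived sc br) 0} \<subseteq> {0}"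
        using dab by auto
      then have "lcs sc br (derived sc br) (Suc 0) \<subseteq> {0}"
        by (simp add: vs.span_minimal)
      then show "lcs sc br (derived sc br) (Suc 0) = {0}"
        using vs.span_zero by auto
    qed
    have sub: "derived sc br \<subseteq> fitting sc br"
      unfolding fitting_def using nil by blast
    have "vs.subspace (fitting sc br)"
      unfolding fitting_def lie_ideal_def by (rule vs.subspace_Inter) blast
    then show ?thesis using J sub dprod unfolding abelian_set_def by blast
  qed
  interpret m: mla2 sc br J a q j fs
    apply unfold_locales
    using aL aR sL sR al jc props assms(4) by blast+
  have f: "f = m.FF" by (simp add: m.FF_def assms(7))
  have bJ: "b \<beta> \<in> J" for \<beta> using assms(5) unfolding generates_module_def by blast
  show ?thesis
  proof (intro exI[of _ m.phi] conjI allI impI)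
    show "lie_hom sc br m.phi" unfolding lie_hom_def using m.phi_linear m.hom by blast
    show "m.phi (b \<beta>) = poly_act sc br a (b \<beta>) (1 + f)" for \<beta>
      by (simp add: m.phi_J[OF bJ] m.psi_def f)
    show "m.phi (a \<alpha>) = a \<alpha> + (\<Sum>i<q. poly_act sc br a (br (a \<alpha>) (a (j i))) (fs i))" for \<alpha>
      by (simp add: m.phi_a m.h_def)
    show "inj m.phi" if "torsion_free sc br a J"
      using m.phi_inj[OF that] assms(6) f by simp
  qed
qed

end
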